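(* Let $L\subseteq\Sigma^*$ be a regular language. Then $N^1(L)=O(1)$ if and only if $L\in\mathcal{C}om(\Sigma)$ (i.e. its syntactic monoid is commutative); otherwise $N^1(L)=\Omega(\log n)$.
   Context: Non-deterministic communication complexity: for $f:X\times Y\to\{0,1\}$, $N^1(f)$ is the minimum cost of a non-deterministic protocol for $f$; equivalently, up to an additive constant 2, $N^1(f)=\log_2 C^1(f)$, where $C^1(f)$ is the minimum number of rectangles $S\times T\subseteq X\times Y$ on which $f\equiv1$ whose union is $f^{-1}(1)$. For a language $L\subseteq\Sigma^*$, $N^1(L)(n)$ is $N^1$ of the function in which Alice receives $a_1,a_3,\dots,a_{2n-1}$, Bob receives $a_2,a_4,\dots,a_{2n}$, each $a_i\in\Sigma\cup\{\epsilon\}$ ($\epsilon$ the empty word), and the value is $1$ iff $a_1a_2\cdots a_{2n}\in L$. The syntactic monoid of $L$ is $\Sigma^*/\equiv_L$ where $x\equiv_L y$ iff for all $u,v\in\Sigma^*$, $uxv\in L\Leftrightarrow uyv\in L$. $\mathcal{C}om(\Sigma)$ denotes the set of regular languages over $\Sigma$ whose syntactic monoid is commutative. Asymptotics are as $n\to\infty$. *)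

theory Defs
  imports Complex_Main "HOL-Library.Landau_Symbols"
begin

definition regular :: "'a list set \<Rightarrow> bool" where
  "regular L \<longleftrightarrow> (\<exists>(Q::nat set) (\<delta>::nat \<Rightarrow> 'a \<Rightarrow> nat) q0 F.
      finite Q \<and> q0 \<in> Q \<and> (\<forall>q\<in>Q. \<forall>a. \<delta> q a \<in> Q) \<and> F \<subseteq> Q \<and>
      L = {w. foldl \<delta> q0 w \<in> F})"

definition synt_equiv :: "'a list set \<Rightarrow> 'a list \<Rightarrow> 'a list \<Rightarrow> bool" where
  "synt_equiv L x y \<longleftrightarrow> (\<forall>u v. u @ x @ v \<in> L \<longleftrightarrow> u @ y @ v \<in> L)"

definition synt_monoid_commutative :: "'a list set \<Rightarrow> bool" where
  "synt_monoid_commutative L \<longleftrightarrow> (\<forall>x y. synt_equiv L (x @ y) (y @ x))"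

definition one_cover :: "('x \<Rightarrow> 'y \<Rightarrow> bool) \<Rightarrow> 'x set \<Rightarrow> 'y set \<Rightarrow> ('x set \<times> 'y set) set \<Rightarrow> bool" where
  "one_cover f X Y R \<longleftrightarrow> finite R \<and>
     (\<forall>(S,T)\<in>R. S \<subseteq> X \<and> T \<subseteq> Y \<and> (\<forall>x\<in>S. \<forall>y\<in>T. f x y)) \<and>
     (\<Union>(S,T)\<in>R. S \<times> T) = {(x,y). x \<in> X \<and> y \<in> Y \<and> f x y}"

definition C1 :: "('x \<Rightarrow> 'y \<Rightarrow> bool) \<Rightarrow> 'x set \<Rightarrow> 'y set \<Rightarrow> nat" where
  "C1 f X Y = (LEAST k. \<exists>R. one_cover f X Y R \<and> card R = k)"

text \<open>N^1 = log2 C^1 (up to an additive constant; max 1 avoids log 0 when f is constantly 0).\<close>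
definition N1 :: "('x \<Rightarrow> 'y \<Rightarrow> bool) \<Rightarrow> 'x set \<Rightarrow> 'y set \<Rightarrow> real" where
  "N1 f X Y = log 2 (real (max 1 (C1 f X Y)))"

definition opt_word :: "'a option \<Rightarrow> 'a list" where
  "opt_word a = (case a of None \<Rightarrow> [] | Some b \<Rightarrow> [b])"

text \<open>Alice holds a1,a3,...,a_{2n-1}, Bob holds a2,...,a_{2n}; None encodes the empty word.\<close>
definition interleave :: "'a option list \<Rightarrow> 'a option list \<Rightarrow> 'a list" where
  "interleave xs ys = concat (map (\<lambda>(a,b). opt_word a @ opt_word b) (zip xs ys))"

definition inputs :: "nat \<Rightarrow> 'a option list set" where
  "inputs n = {xs. length xs = n}"

definition N1_lang :: "'a list set \<Rightarrow> nat \<Rightarrow> real" where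
  "N1_lang L n = N1 (\<lambda>xs ys. interleave xs ys \<in> L) (inputs n) (inputs n)"

end

theory Submission
  imports Defs "HOL-Real_Asymp.Real_Asymp"
begin

definition oW :: "'a option list \<Rightarrow> 'a list" where
  "oW xs = concat (map opt_word xs)"

lemma oW_simps[simp]: "oW [] = []" "oW (a # xs) = opt_word a @ oW xs"
  "oW (xs @ ys) = oW xs @ oW ys"
  by (auto simp: oW_def)

lemma oW_Some[simp]: "oW (map Some w) = w"
  by (induct w) (auto simp: opt_word_def)

lemma oW_None[simp]: "oW (replicate k None) = []"
  by (induct k) (auto simp: opt_word_def)

lemma interleave_Nil[simp]: "interleave [] ys = []" "interleave xs [] = []"
  by (auto simp: interleave_def)

lemma interleave_Cons[simp]: "interleave (x # xs) (y # ys) = opt_word x @ opt_word y @ interleave xs ys"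
  by (auto simp: interleave_def)

lemma interleave_append:
  "length xs1 = length ys1 \<Longrightarrow> interleave (xs1 @ xs2) (ys1 @ ys2) = interleave xs1 ys1 @ interleave xs2 ys2"
  by (auto simp: interleave_def)

lemma interleave_NoneR: "interleave xs (replicate (length xs) None) = oW xs"
  by (induct xs) (auto simp: opt_word_def)

lemma interleave_NoneL: "interleave (replicate (length ys) None) ys = oW ys"
  by (induct ys) (auto simp: opt_word_def)

lemma interleave_comm:
  assumes "length xs = length ys" "synt_monoid_commutative L"
  shows "(u @ interleave xs ys @ v \<in> L) \<longleftrightarrow> (u @ oW xs @ oW ys @ v \<in> L)"
  using assms(1)
proof (induct xs ys arbitrary: u rule: list_induct2)
  case Nil
  then show ?case by simp
next
  case (Cons x xs y ys)
  have "u @ interleave (x#xs) (y#ys) @ v \<in> L \<longleftrightarrow> (u @ opt_word x @ opt_word y) @ interleave xs ys @ v \<in> L"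
    by simp
  also have "\<dots> \<longleftrightarrow> (u @ opt_word x) @ (opt_word y @ oW xs) @ (oW ys @ v) \<in> L"
    using Cons(2)[of "u @ opt_word x @ opt_word y"] by simp
  also have "\<dots> \<longleftrightarrow> (u @ opt_word x) @ (oW xs @ opt_word y) @ (oW ys @ v) \<in> L"
    using assms(2) unfolding synt_monoid_commutative_def synt_equiv_def by blast
  also have "\<dots> \<longleftrightarrow> u @ oW (x#xs) @ oW (y#ys) @ v \<in> L" by simp
  finally show ?case .
qed

lemma mid_le:
  assumes "p + length x \<le> q"
    "p + length x + r = q + length y + s"
  shows "interleave (replicate p None @ map Some x @ replicate r None)
                    (replicate q None @ map Some y @ replicate s None) = x @ y"
proof -
  have A: "replicate p None @ map Some x @ replicate r None = (replicate p None @ map Some x) @ replicate r None" by simp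
  have B: "replicate q None @ map Some y @ replicate s None =
     replicate (length (replicate p None @ map Some x)) None @ (replicate (q - p - length x) None @ map Some y @ replicate s None)"
    using assms(1) by (simp add: replicate_add[symmetric])
  have C: "r = length (replicate (q - p - length x) None @ map Some y @ replicate s None)"
    using assms by simp
  show ?thesis
    unfolding A B
    apply (subst interleave_append, simp)
    apply (subst interleave_NoneR)
    apply (subst C)
    apply (subst interleave_NoneL)
    by simp
qed

lemma mid_ge:
  assumes "q + length y \<le> p"
    "p + length x + r = q + length y + s"
  shows "interleave (replicate p None @ map Some x @ replicate r None)
                    (replicate q None @ map Some y @ replicate s None) = y @ x"
proof -
  have B: "replicate q None @ map Some y @ replicate s None = (replicate q None @ map Some y) @ replicate s None" by simp
  have A: "replicate p None @ map Some x @ replicate r None =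
     replicate (length (replicate q None @ map Some y)) None @ (replicate (p - q - length y) None @ map Some x @ replicate r None)"
    using assms(1) by (simp add: replicate_add[symmetric])
  have C: "s = length (replicate (p - q - length y) None @ map Some x @ replicate r None)"
    using assms by simp
  show ?thesis
    unfolding A B
    apply (subst interleave_append, simp)
    apply (subst interleave_NoneL)
    apply (subst C)
    apply (subst interleave_NoneR)
    by simp
qed


lemma fooling:
  assumes cov: "one_cover f X Y R"
    and ab: "\<And>i. i < m \<Longrightarrow> a i \<in> X \<and> b i \<in> Y \<and> f (a i) (b i)"
    and fo: "\<And>i j. i < m \<Longrightarrow> j < m \<Longrightarrow> i \<noteq> j \<Longrightarrow> \<not> (f (a i) (b j) \<and> f (a j) (b i))"
  shows "m \<le> card R"
proof -
  have fin: "finite R" using cov by (simp add: one_cover_def)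
  have U: "(\<Union>(S,T)\<in>R. S \<times> T) = {(x,y). x \<in> X \<and> y \<in> Y \<and> f x y}"
    and rect: "\<forall>(S,T)\<in>R. S \<subseteq> X \<and> T \<subseteq> Y \<and> (\<forall>x\<in>S. \<forall>y\<in>T. f x y)"
    using cov by (auto simp: one_cover_def)
  have ex: "\<exists>r\<in>R. (a i, b i) \<in> fst r \<times> snd r" if "i < m" for i
  proof -
    have "(a i, b i) \<in> (\<Union>(S,T)\<in>R. S \<times> T)" using U ab[OF that] by auto
    then obtain S T where "(S,T)\<in>R" "a i \<in> S" "b i \<in> T" by auto
    then show ?thesis by force
  qed
  define g where "g i = (SOME r. r \<in> R \<and> (a i, b i) \<in> fst r \<times> snd r)" for i
  have g: "g i \<in> R \<and> (a i, b i) \<in> fst (g i) \<times> snd (g i)" if "i < m" for i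
    unfolding g_def using someI_ex[OF ex[OF that, unfolded Bex_def]] .
  have "inj_on g {..<m}"
  proof (rule inj_onI)
    fix i j assume i: "i \<in> {..<m}" and j: "j \<in> {..<m}" and e: "g i = g j"
    show "i = j"
    proof (rule ccontr)
      assume ne: "i \<noteq> j"
      obtain S T where st: "g i = (S,T)" by fastforce
      have gi: "g i \<in> R" using g i by auto
      have "\<forall>x\<in>S. \<forall>y\<in>T. f x y" using rect gi st by auto
      moreover have "a i \<in> S" "b i \<in> T" using g[of i] i st by auto
      moreover have "a j \<in> S" "b j \<in> T" using g[of j] j st e by auto
      ultimately have "f (a i) (b j) \<and> f (a j) (b i)" by auto
      then show False using fo i j ne by auto
    qed
  qed
  moreover have "g ` {..<m} \<subseteq> R" using g by auto
  ultimately have "card {..<m} \<le> card R" using card_inj_on_le fin by blast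
  then show ?thesis by simp
qed

lemma C1_lower:
  assumes ex: "\<exists>R. one_cover f X Y R"
    and ab: "\<And>i. i < m \<Longrightarrow> a i \<in> X \<and> b i \<in> Y \<and> f (a i) (b i)"
    and fo: "\<And>i j. i < m \<Longrightarrow> j < m \<Longrightarrow> i \<noteq> j \<Longrightarrow> \<not> (f (a i) (b j) \<and> f (a j) (b i))"
  shows "m \<le> C1 f X Y"
proof -
  have "\<exists>k R. one_cover f X Y R \<and> card R = k" using ex by auto
  then have "\<exists>R. one_cover f X Y R \<and> card R = C1 f X Y"
    unfolding C1_def by (rule LeastI_ex)
  then obtain R where "one_cover f X Y R" "card R = C1 f X Y" by blast
  with fooling[OF this(1) ab fo] show ?thesis by simp
qed

lemma C1_upper:
  assumes "one_cover f X Y R"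
  shows "C1 f X Y \<le> card R"
  unfolding C1_def using assms by (intro Least_le) blast

lemma foldl_in: "q \<in> Q \<Longrightarrow> \<forall>q\<in>Q. \<forall>a. \<delta> q a \<in> Q \<Longrightarrow> foldl \<delta> q w \<in> Q"
  by (induct w arbitrary: q) auto

lemma regular_cover:
  fixes L :: "'a::finite list set"
  assumes reg: "regular L"
  obtains K where "\<And>n. \<exists>R. one_cover (\<lambda>xs ys. interleave xs ys \<in> L) (inputs n) (inputs n) R"
    and "synt_monoid_commutative L \<Longrightarrow> \<forall>n. C1 (\<lambda>xs ys. interleave xs ys \<in> L) (inputs n) (inputs n) \<le> K"
proof -
  obtain Q :: "nat set" and \<delta> q0 F where fQ: "finite Q" and q0: "q0 \<in> Q" and cl: "\<forall>q\<in>Q. \<forall>a. \<delta> q a \<in> Q"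
    and FQ: "F \<subseteq> Q" and Ld: "L = {w. foldl \<delta> q0 w \<in> F}"
    using reg unfolding regular_def by blast
  define f where "f = (\<lambda>xs ys. interleave xs ys \<in> L)"
  have ex: "\<exists>R. one_cover f (inputs n) (inputs n) R" for n
  proof -
    let ?P = "{(x,y). x \<in> inputs n \<and> y \<in> inputs n \<and> f x y}"
    have fin: "finite (inputs n :: 'a option list set)"
      using finite_lists_length_eq[of "UNIV :: 'a option set" n] unfolding inputs_def by simp
    define R where "R = (\<lambda>(x,y). ({x},{y})) ` ?P"
    have "finite ?P" using fin by (auto intro: finite_subset[of _ "inputs n \<times> inputs n"])
    then have "finite R" unfolding R_def by auto
    moreover have "(\<Union>(S,T)\<in>R. S \<times> T) = ?P" unfolding R_def by auto
    moreover have "\<forall>(S,T)\<in>R. S \<subseteq> inputs n \<and> T \<subseteq> inputs n \<and> (\<forall>x\<in>S. \<forall>y\<in>T. f x y)"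
      unfolding R_def by auto
    ultimately show ?thesis unfolding one_cover_def by blast
  qed
  define \<alpha> where "\<alpha> xs = foldl \<delta> q0 (oW xs)" for xs :: "'a option list"
  define \<beta> where "\<beta> ys = {p\<in>Q. foldl \<delta> p (oW ys) \<in> F}" for ys :: "'a option list"
  define K where "K = card (Q \<times> Pow Q)"
  have bound: "C1 f (inputs n) (inputs n) \<le> K" if com: "synt_monoid_commutative L" for n
  proof -
    define R where "R = (\<lambda>(p,S). ({xs\<in>inputs n. \<alpha> xs = p}, {ys\<in>inputs n. \<beta> ys = S})) ` {(p,S). p\<in>Q \<and> S \<subseteq> Q \<and> p\<in>S}"
    have feq: "f xs ys \<longleftrightarrow> \<alpha> xs \<in> \<beta> ys" if "xs \<in> inputs n" "ys \<in> inputs n" for xs ys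
    proof -
      have "f xs ys \<longleftrightarrow> [] @ interleave xs ys @ [] \<in> L" unfolding f_def by simp
      also have "\<dots> \<longleftrightarrow> [] @ oW xs @ oW ys @ [] \<in> L"
        using that com by (intro interleave_comm) (auto simp: inputs_def)
      also have "\<dots> \<longleftrightarrow> \<alpha> xs \<in> \<beta> ys"
        unfolding Ld \<alpha>_def \<beta>_def using foldl_in[OF q0 cl] by auto
      finally show ?thesis .
    qed
    have sub: "{(p,S). p\<in>Q \<and> S \<subseteq> Q \<and> p\<in>S} \<subseteq> Q \<times> Pow Q" by auto
    have finQP: "finite (Q \<times> Pow Q)" using fQ by auto
    have "one_cover f (inputs n) (inputs n) R"
      unfolding one_cover_def
    proof (intro conjI)
      show "finite R" unfolding R_def using finite_subset[OF sub finQP] by auto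
      show "\<forall>(S, T)\<in>R. S \<subseteq> inputs n \<and> T \<subseteq> inputs n \<and> (\<forall>x\<in>S. \<forall>y\<in>T. f x y)"
        unfolding R_def using feq by auto
      show "(\<Union>(S, T)\<in>R. S \<times> T) = {(x, y). x \<in> inputs n \<and> y \<in> inputs n \<and> f x y}"
      proof
        show "(\<Union>(S, T)\<in>R. S \<times> T) \<subseteq> {(x, y). x \<in> inputs n \<and> y \<in> inputs n \<and> f x y}"
          unfolding R_def using feq by auto
        show "{(x, y). x \<in> inputs n \<and> y \<in> inputs n \<and> f x y} \<subseteq> (\<Union>(S, T)\<in>R. S \<times> T)"
        proof (clarify)
          fix x y assume xy: "x \<in> inputs n" "y \<in> inputs n" "f x y"
          have "\<alpha> x \<in> Q" unfolding \<alpha>_def using foldl_in[OF q0 cl] .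
          moreover have "\<beta> y \<subseteq> Q" unfolding \<beta>_def by auto
          moreover have "\<alpha> x \<in> \<beta> y" using feq xy by auto
          ultimately have "({xs\<in>inputs n. \<alpha> xs = \<alpha> x}, {ys\<in>inputs n. \<beta> ys = \<beta> y}) \<in> R"
            unfolding R_def by (intro image_eqI[of _ _ "(\<alpha> x, \<beta> y)"]) auto
          then show "(x, y) \<in> (\<Union>(S, T)\<in>R. S \<times> T)" using xy by blast
        qed
      qed
    qed
    then have "C1 f (inputs n) (inputs n) \<le> card R" by (rule C1_upper)
    also have "card R \<le> card {(p,S). p\<in>Q \<and> S \<subseteq> Q \<and> p\<in>S}"
      unfolding R_def using finite_subset[OF sub finQP] by (rule card_image_le)
    also have "\<dots> \<le> K" unfolding K_def using sub finQP by (rule card_mono[rotated])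
    finally show ?thesis .
  qed
  show ?thesis
    apply (rule that[of K])
    using ex bound unfolding f_def by auto
qed



lemma interleave_u: "interleave (map Some w) (replicate (length w) None) = w"
  using interleave_NoneR[of "map Some w"] by simp

lemma interleave_v: "interleave (map Some w @ replicate p None) (replicate (length w) None @ replicate p None) = w"
  using interleave_NoneR[of "map Some w @ replicate p None"] by (simp add: replicate_add)

lemma arith_d:
  fixes n c K :: nat
  assumes K: "K > 0" and n: "n \<ge> 2*(c+K) + 4*K*K"
  shows "n \<le> ((n - c) div K) * ((n - c) div K)" "1 \<le> (n - c) div K" "(n - c) div K * K \<le> n - c"
proof -
  define d where "d = (n - c) div K"
  have e: "d * K + (n - c) mod K = n - c" unfolding d_def by simp
  have "(n - c) mod K < K" using K by simp
  then have "n \<le> 2*K*d" using e n by (simp add: algebra_simps)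
  then have "n * n \<le> (2*K*d)*(2*K*d)" using mult_le_mono by blast
  moreover have "(4*K*K)*n \<le> n*n" using n by (intro mult_le_mono1) linarith
  moreover have "(2*K*d)*(2*K*d) = (4*K*K)*(d*d)" by (simp add: algebra_simps)
  ultimately have "(4*K*K)*n \<le> (4*K*K)*(d*d)" by linarith
  then have nd: "n \<le> d*d" using K by simp
  then show "n \<le> ((n - c) div K) * ((n - c) div K)" unfolding d_def .
  have "d \<noteq> 0"
  proof
    assume "d = 0"
    then show False using nd n K by simp
  qed
  then show "1 \<le> (n - c) div K" unfolding d_def by simp
  show "(n - c) div K * K \<le> n - c" by (rule div_times_less_eq_dividend)
qed

lemma lower_bound:
  fixes L :: "'a::finite list set"
  assumes reg: "regular L" and in1: "u@x@y@v \<in> L" and out: "u@y@x@v \<notin> L"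
  shows "\<forall>n \<ge> 2*((length u + length v) + (length x + length y)) + 4*(length x + length y)*(length x + length y).
           ln (real n) / (2 * ln 2) \<le> N1_lang L n"
proof (intro allI impI)
  fix n
  define K where "K = length x + length y"
  define c where "c = length u + length v"
  assume n: "n \<ge> 2*((length u + length v) + (length x + length y)) + 4*(length x + length y)*(length x + length y)"
  then have n': "n \<ge> 2*(c+K) + 4*K*K" unfolding K_def c_def by simp
  have K: "K > 0"
  proof (rule ccontr)
    assume "\<not> K > 0"
    then have "x = []" "y = []" unfolding K_def by auto
    then show False using in1 out by simp
  qed
  define d where "d = (n - c) div K"
  have dd: "n \<le> d * d" "1 \<le> d" "d * K \<le> n - c" using arith_d[OF K n'] unfolding d_def by auto
  define f where "f = (\<lambda>xs ys. interleave xs ys \<in> L)"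
  define a where "a i = map Some u @ (replicate (i*K) None @ map Some x @ replicate (d*K - i*K - length x) None)
      @ (map Some v @ replicate (n-c-d*K) None)" for i
  define b where "b j = replicate (length u) None @ (replicate (j*K + length x) None @ map Some y
      @ replicate (d*K - j*K - length x - length y) None) @ (replicate (length v) None @ replicate (n-c-d*K) None)" for j
  have iK: "i*K + K \<le> d*K" if "i < d" for i
  proof -
    have "Suc i * K \<le> d * K" using that by (intro mult_le_mono1) simp
    then show ?thesis by simp
  qed
  have fab: "f (a i) (b j) \<longleftrightarrow> i \<le> j" if ij: "i < d" "j < d" for i j
  proof -
    have li: "i*K + K \<le> d*K" and lj: "j*K + K \<le> d*K" using iK ij by auto
    have mid: "interleave (replicate (i*K) None @ map Some x @ replicate (d*K - i*K - length x) None)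
      (replicate (j*K + length x) None @ map Some y @ replicate (d*K - j*K - length x - length y) None)
      = (if i \<le> j then x @ y else y @ x)"
    proof (cases "i \<le> j")
      case True
      have "i*K \<le> j*K" using True by (rule mult_le_mono1)
      then show ?thesis using True li lj unfolding K_def by (subst mid_le) auto
    next
      case False
      have "Suc j*K \<le> i*K" using False by (intro mult_le_mono1) simp
      then show ?thesis using False li lj unfolding K_def by (subst mid_ge) auto
    qed
    have "interleave (a i) (b j) = u @ (if i \<le> j then x @ y else y @ x) @ v"
      unfolding a_def b_def
      using li lj
      apply (subst interleave_append, simp)
      apply (subst interleave_append, simp add: K_def)
      apply (simp only: interleave_u interleave_v mid)
      done
    then show ?thesis unfolding f_def using in1 out by auto
  qed
  have lens: "a i \<in> inputs n \<and> b i \<in> inputs n" if "i < d" for i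
    using iK[OF that] dd(3) n' unfolding a_def b_def inputs_def K_def c_def by auto
  obtain K0 where ex: "\<And>n. \<exists>R. one_cover (\<lambda>xs ys. interleave xs ys \<in> L) (inputs n) (inputs n) R"
    using regular_cover[OF reg] by metis
  have "d \<le> C1 f (inputs n) (inputs n)"
  proof (rule C1_lower[where a=a and b=b])
    show "\<exists>R. one_cover f (inputs n) (inputs n) R" using ex unfolding f_def by blast
    show "\<And>i. i < d \<Longrightarrow> a i \<in> inputs n \<and> b i \<in> inputs n \<and> f (a i) (b i)"
      using lens fab by auto
    show "\<And>i j. i < d \<Longrightarrow> j < d \<Longrightarrow> i \<noteq> j \<Longrightarrow> \<not> (f (a i) (b j) \<and> f (a j) (b i))"
      using fab by auto
  qed
  then have "real d \<le> real (max 1 (C1 f (inputs n) (inputs n)))" by simp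
  then have "ln (real d) \<le> ln (real (max 1 (C1 f (inputs n) (inputs n))))"
    using dd(2) by (intro ln_mono) auto
  moreover have "ln (real n) \<le> 2 * ln (real d)"
  proof -
    have "n \<ge> 1" using n' K by simp
    have "real n \<le> real d * real d" using dd(1) by (metis of_nat_le_iff of_nat_mult)
    then have "ln (real n) \<le> ln (real d * real d)" using \<open>n \<ge> 1\<close> by (intro ln_mono) auto
    also have "\<dots> = 2 * ln (real d)" using dd(2) by (simp add: ln_mult)
    finally show ?thesis .
  qed
  ultimately have "ln (real n) / (2 * ln 2) \<le> ln (real (max 1 (C1 f (inputs n) (inputs n)))) / ln 2"
    by (simp add: divide_simps)
  then show "ln (real n) / (2 * ln 2) \<le> N1_lang L n"
    unfolding N1_lang_def N1_def f_def log_def by simp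
qed


lemma N1_nonneg: "N1_lang L n \<ge> 0"
  unfolding N1_lang_def N1_def by simp

theorem mainTheorem7:
  fixes L :: "'a::finite list set"
  assumes "regular L"
  shows "(N1_lang L \<in> O(\<lambda>_. 1) \<longleftrightarrow> synt_monoid_commutative L) \<and>
         (\<not> synt_monoid_commutative L \<longrightarrow> N1_lang L \<in> \<Omega>(\<lambda>n. ln (real n)))"
proof -
  obtain K0 where ex: "\<And>n. \<exists>R. one_cover (\<lambda>xs ys. interleave xs ys \<in> L) (inputs n) (inputs n) R"
    and bd: "synt_monoid_commutative L \<Longrightarrow> \<forall>n. C1 (\<lambda>xs ys. interleave xs ys \<in> L) (inputs n) (inputs n) \<le> K0"
    using regular_cover[OF assms] by metis
  have up: "N1_lang L \<in> O(\<lambda>_. 1)" if com: "synt_monoid_commutative L"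
  proof -
    define c where "c = 1 + log 2 (real (max 1 K0))"
    have "log 2 (real (max 1 K0)) \<ge> 0" by simp
    then have c0: "c > 0" unfolding c_def by linarith
    have "N1_lang L n \<le> log 2 (real (max 1 K0))" for n
    proof -
      have "max 1 (C1 (\<lambda>xs ys. interleave xs ys \<in> L) (inputs n) (inputs n)) \<le> max 1 K0"
        using bd[OF com] by (meson max.mono order_refl)
      then show ?thesis unfolding N1_lang_def N1_def
        by (subst log_le_cancel_iff) auto
    qed
    then have "\<forall>n. norm (N1_lang L n) \<le> c * norm (1::real)"
      using N1_nonneg[of L] unfolding c_def by (simp add: abs_of_nonneg) (smt (verit))
    then show ?thesis using c0 by (intro landau_o.bigI[of c]) auto
  qed
  have om: "N1_lang L \<in> \<Omega>(\<lambda>n. ln (real n))" if nc: "\<not> synt_monoid_commutative L"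
  proof -
    obtain x y u v where "\<not> (u @ (x@y) @ v \<in> L \<longleftrightarrow> u @ (y@x) @ v \<in> L)"
      using nc unfolding synt_monoid_commutative_def synt_equiv_def by blast
    then obtain x y u v where in1: "u@x@y@v \<in> L" and out: "u@y@x@v \<notin> L" by auto
    obtain N0 where lb: "\<forall>n\<ge>N0. ln (real n) / (2 * ln 2) \<le> N1_lang L n"
      using lower_bound[OF assms in1 out] by blast
    have "eventually (\<lambda>n. norm (N1_lang L n) \<ge> (1 / (2 * ln 2)) * norm (ln (real n))) at_top"
      unfolding eventually_at_top_linorder
    proof (intro exI[of _ "max N0 1"] allI impI)
      fix n :: nat assume n: "n \<ge> max N0 1"
      then have "ln (real n) \<ge> 0" by simp
      then show "norm (N1_lang L n) \<ge> (1 / (2 * ln 2)) * norm (ln (real n))"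
        using lb n N1_nonneg[of L n] by auto
    qed
    then show ?thesis by (intro landau_omega.bigI[of "1 / (2 * ln 2)"]) auto
  qed
  have lnsmall: "(\<lambda>_. 1::real) \<in> o(\<lambda>n. ln (real n))" by real_asymp
  have down: "synt_monoid_commutative L" if o1: "N1_lang L \<in> O(\<lambda>_. 1)"
  proof (rule ccontr)
    assume "\<not> synt_monoid_commutative L"
    then have "(\<lambda>n. ln (real n)) \<in> O(N1_lang L)" using om by (simp add: bigomega_iff_bigo)
    then have "(\<lambda>n. ln (real n)) \<in> O(\<lambda>_. 1::real)" using o1 by (rule landau_o.big_trans)
    then have "eventually (\<lambda>n::nat. (1::real) = 0) at_top"
      using lnsmall by (intro landau_o.small_big_asymmetric)
    then show False by simp
  qed
  show ?thesis using up down om by blast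
qed

end
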